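(* Let $m\ge 2$ and $d$ be integers with $m/2<d\le m$, and consider the $(m,d)$ algorithm on the complete graph on $N$ nodes. For $x\in(0,1]$ let $Z_x$ be a random variable with the Binomial$(m,x)$ distribution and define $$g(x)=\frac{x\,\mathbb{P}(Z_x\le m-d)}{(1-x)\,\mathbb{P}(Z_x\ge d)}\in\mathbb{R}^+\cup\{+\infty\},$$ with $g(0)=+\infty$. Then $g(x)>1$ for all $x\in[0,1/2)$, and for all $\alpha\in(0,1/2)$, $$\limsup_{N\to\infty}\frac1N\log h_N(\alpha)\le-\int_\alpha^{1/2}\log g(x)\,dx.$$
   Context: The $(m,d)$ algorithm (integers $1\le d\le m$) on the complete graph on $N$ nodes: each node has a state in $\{0,1\}$ and an independent unit-rate exponential clock, independent of all states. At each tick of its clock, a node samples $m$ nodes uniformly at random from all $N$ nodes, with replacement, and observes their current states; if at least $d$ of the sampled nodes have a state different from its own, it switches its state, otherwise it keeps it. The number $X(t)$ of nodes in state 1 is a continuous-time Markov chain on $\{0,\ldots,N\}$ with rates $q_{n,n+1}=(N-n)\mathbb{P}(\mathrm{Bin}(m,n/N)\ge d)$ and $q_{n,n-1}=n\,\mathbb{P}(\mathrm{Bin}(m,(N-n)/N)\ge d)$; $0$ and $N$ are absorbing and $X(\infty)$ is the absorbing state eventually reached. For $\alpha=i/N$, $i\in\{0,\ldots,N\}$, $h_N(\alpha)=\mathbb{P}(X(\infty)=N\mid X(0)=\lfloor\alpha N\rfloor)$; for general $\alpha\in[0,1]$, $h_N(\alpha)=(N\alpha-\lfloor N\alpha\rfloor)h_N(\lceil\alpha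 N\rceil/N)+(\lceil N\alpha\rceil-N\alpha)h_N(\lfloor\alpha N\rfloor/N)$. *)

theory Defs
  imports "HOL-Probability.Probability"
begin

definition bin_ge :: "nat \<Rightarrow> real \<Rightarrow> nat \<Rightarrow> real" where
  "bin_ge m p d = measure_pmf.prob (binomial_pmf m p) {d..}"

definition bin_le :: "nat \<Rightarrow> real \<Rightarrow> nat \<Rightarrow> real" where
  "bin_le m p k = measure_pmf.prob (binomial_pmf m p) {..k}"

definition rate_up :: "nat \<Rightarrow> nat \<Rightarrow> nat \<Rightarrow> nat \<Rightarrow> real" where
  "rate_up m d N n = real (N - n) * bin_ge m (real n / real N) d"

definition rate_down :: "nat \<Rightarrow> nat \<Rightarrow> nat \<Rightarrow> nat \<Rightarrow> real" where
  "rate_down m d N n = real n * bin_ge m (real (N - n) / real N) d"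

text \<open>One step of the embedded jump chain of X(t); 0 and N are absorbing.\<close>
definition jump_kernel :: "nat \<Rightarrow> nat \<Rightarrow> nat \<Rightarrow> nat \<Rightarrow> nat pmf" where
  "jump_kernel m d N n =
     (if n = 0 \<or> N \<le> n then return_pmf n
      else map_pmf (\<lambda>b. if b then n + 1 else n - 1)
             (bernoulli_pmf (rate_up m d N n / (rate_up m d N n + rate_down m d N n))))"

definition jump_dist :: "nat \<Rightarrow> nat \<Rightarrow> nat \<Rightarrow> nat \<Rightarrow> nat \<Rightarrow> nat pmf" where
  "jump_dist m d N i t = ((\<lambda>p. bind_pmf p (jump_kernel m d N)) ^^ t) (return_pmf i)"

text \<open>P(X(\<infinity>) = N | X(0) = i): the probability of absorption at N, i.e. the limit
  of the (nondecreasing) probabilities of having been absorbed at N after t jumps.\<close>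
definition absorb_prob :: "nat \<Rightarrow> nat \<Rightarrow> nat \<Rightarrow> nat \<Rightarrow> real" where
  "absorb_prob m d N i = lim (\<lambda>t. pmf (jump_dist m d N i t) N)"

definition h :: "nat \<Rightarrow> nat \<Rightarrow> nat \<Rightarrow> real \<Rightarrow> real" where
  "h m d N \<alpha> =
     (if real N * \<alpha> \<in> \<int> then absorb_prob m d N (nat \<lfloor>real N * \<alpha>\<rfloor>)
      else (real N * \<alpha> - of_int \<lfloor>real N * \<alpha>\<rfloor>) * absorb_prob m d N (nat \<lceil>real N * \<alpha>\<rceil>)
         + (of_int \<lceil>real N * \<alpha>\<rceil> - real N * \<alpha>) * absorb_prob m d N (nat \<lfloor>real N * \<alpha>\<rfloor>))"

definition g :: "nat \<Rightarrow> nat \<Rightarrow> real \<Rightarrow> ereal" where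
  "g m d x =
     (if x = 0 then \<infinity>
      else if (1 - x) * bin_ge m x d = 0 then \<infinity>
      else ereal (x * bin_le m x (m - d) / ((1 - x) * bin_ge m x d)))"

end

theory Submission
  imports Defs
begin


definition bt :: "nat \<Rightarrow> real \<Rightarrow> nat \<Rightarrow> real" where
  "bt m p k = real (m choose k) * p^k * (1-p)^(m-k)"

lemma set_pmf_bin_sub: assumes "0 \<le> p" "p \<le> 1" shows "set_pmf (binomial_pmf m p) \<subseteq> {..m}"
  using assms by (auto simp: set_pmf_binomial_eq)

lemma bin_ge_sum: assumes "0 \<le> p" "p \<le> 1"
  shows "bin_ge m p d = (\<Sum>k\<in>{d..m}. bt m p k)"
proof -
  have "{d..} \<inter> set_pmf (binomial_pmf m p) = {d..m} \<inter> set_pmf (binomial_pmf m p)"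
    using set_pmf_bin_sub[OF assms, of m] by auto
  hence "measure_pmf.prob (binomial_pmf m p) {d..} = measure_pmf.prob (binomial_pmf m p) {d..m}"
    by (metis measure_Int_set_pmf)
  also have "\<dots> = (\<Sum>k\<in>{d..m}. pmf (binomial_pmf m p) k)"
    by (simp add: measure_measure_pmf_finite)
  finally show ?thesis using assms by (simp add: bin_ge_def bt_def)
qed

lemma bin_le_sum: assumes "0 \<le> p" "p \<le> 1"
  shows "bin_le m p k = (\<Sum>j\<in>{..k}. bt m p j)"
  using assms by (simp add: bin_le_def bt_def measure_measure_pmf_finite)

lemma bt_nonneg: "0 \<le> p \<Longrightarrow> p \<le> 1 \<Longrightarrow> 0 \<le> bt m p k"
  by (simp add: bt_def)

lemma bin_le_restrict: assumes "k \<le> m" shows "(\<Sum>j\<in>{..k}. bt m p j) = (\<Sum>j\<in>{0..k}. bt m p j)"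
  by (simp add: atLeast0AtMost)

lemma bin_ge_flip: assumes "0 \<le> x" "x \<le> 1" "d \<le> m"
  shows "bin_ge m (1-x) d = bin_le m x (m-d)"
proof -
  have "bin_ge m (1-x) d = (\<Sum>k\<in>{d..m}. bt m (1-x) k)" using assms by (simp add: bin_ge_sum)
  also have "\<dots> = (\<Sum>j\<in>{..m-d}. bt m (1-x) (m-j))"
  proof (rule sum.reindex_bij_witness[of _ "\<lambda>k. m-k" "\<lambda>k. m-k"])
  qed (use assms in auto)
  also have "\<dots> = (\<Sum>j\<in>{..m-d}. bt m x j)"
    by (rule sum.cong) (use assms in \<open>auto simp: bt_def binomial_symmetric[symmetric]\<close>)
  finally show ?thesis using assms by (simp add: bin_le_sum)
qed



lemma term_ineq:
  fixes x :: real
  assumes x: "0 < x" "x < 1/2" and j: "2*j + 1 \<le> m"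
  shows "(1-x) * (x^(m-j) * (1-x)^j) \<le> x * (x^j * (1-x)^(m-j))"
    and "j = 0 \<Longrightarrow> 2 \<le> m \<Longrightarrow> (1-x) * (x^(m-j) * (1-x)^j) < x * (x^j * (1-x)^(m-j))"
proof -
  define e where "e = m - 2*j - 1"
  have mj: "m - j = j + 1 + e" using j by (simp add: e_def)
  have L: "(1-x) * (x^(m-j) * (1-x)^j) = (x^(j+1) * (1-x)^(j+1)) * x^e"
    by (simp add: mj power_add algebra_simps)
  have R: "x * (x^j * (1-x)^(m-j)) = (x^(j+1) * (1-x)^(j+1)) * (1-x)^e"
    by (simp add: mj power_add algebra_simps)
  have pos: "0 < x^(j+1) * (1-x)^(j+1)" using x by simp
  have "x^e \<le> (1-x)^e" using x by (intro power_mono) auto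
  thus "(1-x) * (x^(m-j) * (1-x)^j) \<le> x * (x^j * (1-x)^(m-j))"
    unfolding L R using pos by (simp add: mult_left_mono)
  assume "j = 0" "2 \<le> m"
  hence "e > 0" by (simp add: e_def)
  hence "x^e < (1-x)^e" using x by (intro power_strict_mono) auto
  thus "(1-x) * (x^(m-j) * (1-x)^j) < x * (x^j * (1-x)^(m-j))"
    unfolding L R using pos by (intro mult_strict_left_mono) auto
qed

lemma main_ineq:
  fixes x :: real
  assumes x: "0 < x" "x < 1/2" and m: "2 \<le> m" "real m / 2 < real d" "d \<le> m"
  shows "(1-x) * bin_ge m x d < x * bin_le m x (m-d)"
proof -
  have x1: "0 \<le> x" "x \<le> 1" using x by auto
  have "(1-x) * bin_ge m x d = (\<Sum>k\<in>{d..m}. (1-x) * bt m x k)"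
    using x1 by (simp add: bin_ge_sum sum_distrib_left)
  also have "\<dots> = (\<Sum>j\<in>{..m-d}. (1-x) * bt m x (m-j))"
  proof (rule sum.reindex_bij_witness[of _ "\<lambda>k. m-k" "\<lambda>k. m-k"])
  qed (use m in auto)
  also have "\<dots> < (\<Sum>j\<in>{..m-d}. x * bt m x j)"
  proof (rule sum_strict_mono_ex1)
    have tj: "(1-x) * bt m x (m-j) = real (m choose j) * ((1-x) * (x^(m-j) * (1-x)^j))"
      "x * bt m x j = real (m choose j) * (x * (x^j * (1-x)^(m-j)))" if "j \<le> m" for j
      using that by (simp_all add: bt_def binomial_symmetric[symmetric] algebra_simps)
    have jm: "2*j+1 \<le> m" if "j \<in> {..m-d}" for j using that m by auto
    show "\<forall>j\<in>{..m-d}. (1-x) * bt m x (m-j) \<le> x * bt m x j"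
    proof
      fix j assume j: "j \<in> {..m-d}"
      hence "j \<le> m" by auto
      thus "(1-x) * bt m x (m-j) \<le> x * bt m x j"
        unfolding tj[OF \<open>j \<le> m\<close>] using term_ineq(1)[OF x jm[OF j]]
        by (intro mult_left_mono) auto
    qed
    show "\<exists>j\<in>{..m-d}. (1-x) * bt m x (m-j) < x * bt m x j"
    proof (intro bexI[of _ 0])
      show "(1-x) * bt m x (m-0) < x * bt m x 0"
        unfolding tj[OF le0] using term_ineq(2)[OF x jm[of 0] refl m(1)] by simp
    qed simp
  qed simp
  also have "\<dots> = x * bin_le m x (m-d)"
    using x1 by (simp add: bin_le_sum sum_distrib_left)
  finally show ?thesis .
qed

lemma g_gt1:
  assumes m: "2 \<le> m" "real m / 2 < real d" "d \<le> m" and x: "0 \<le> x" "x < 1/2"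
  shows "g m d x > 1"
proof (cases "x = 0 \<or> (1 - x) * bin_ge m x d = 0")
  case True thus ?thesis by (auto simp: g_def)
next
  case False
  hence x0: "0 < x" and ne: "(1-x) * bin_ge m x d \<noteq> 0" using x by auto
  have ge0: "0 \<le> (1-x) * bin_ge m x d" using x by (simp add: bin_ge_def)
  have lt: "(1-x) * bin_ge m x d < x * bin_le m x (m-d)" using main_ineq[OF x0 x(2) m] .
  have "1 < x * bin_le m x (m-d) / ((1-x) * bin_ge m x d)"
    using ge0 ne lt by (simp add: less_divide_eq)
  thus ?thesis using False by (simp add: g_def)
qed



lemma bin_ge_pos: assumes "0 < x" "x \<le> 1" "d \<le> m" shows "0 < bin_ge m x d"
proof -
  have "0 < (\<Sum>k\<in>{d..m}. bt m x k)"
    by (rule sum_pos2[of _ m]) (use assms in \<open>auto simp: bt_def\<close>)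
  thus ?thesis using assms by (simp add: bin_ge_sum)
qed

lemma bin_ge_nonneg: "0 \<le> bin_ge m x d" by (simp add: bin_ge_def)

lemma nn_integral_pmf_ge:
  fixes f :: "'a \<Rightarrow> ennreal"
  shows "f a * ennreal (pmf p a) \<le> (\<integral>\<^sup>+y. f y \<partial>measure_pmf p)"
proof -
  have "f a * ennreal (pmf p a) = (\<integral>\<^sup>+y. f a * indicator {a} y \<partial>measure_pmf p)"
    by (simp add: emeasure_pmf_single)
  also have "\<dots> \<le> (\<integral>\<^sup>+y. f y \<partial>measure_pmf p)"
    by (intro nn_integral_mono) (auto simp: indicator_def)
  finally show ?thesis .
qed

lemma jump_dist_Suc: "jump_dist m d N i (Suc t) = bind_pmf (jump_dist m d N i t) (jump_kernel m d N)"
  by (simp add: jump_dist_def)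

context
  fixes m d N :: nat
  assumes dm: "d \<le> m" and N1: "1 \<le> N"
begin

definition "rr n = rate_down m d N n / rate_up m d N n"
definition "PP k = (\<Prod>j\<in>{1..k}. rr j)"
definition "SS i = (\<Sum>k<i. PP k)"
definition "phi n = SS (min n N) / SS N"

lemma up_pos: "0 < n \<Longrightarrow> n < N \<Longrightarrow> 0 < rate_up m d N n"
  unfolding rate_up_def using bin_ge_pos[of "real n / real N" d m] dm
  by (intro mult_pos_pos) auto

lemma rr_nonneg: "0 \<le> rr n"
  unfolding rr_def rate_up_def rate_down_def by (intro divide_nonneg_nonneg mult_nonneg_nonneg) (auto simp: bin_ge_nonneg)

lemma PP_nonneg: "0 \<le> PP k" unfolding PP_def by (intro prod_nonneg) (auto simp: rr_nonneg)

lemma SS_mono: "i \<le> j \<Longrightarrow> SS i \<le> SS j"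
  unfolding SS_def by (intro sum_mono2) (auto simp: PP_nonneg)

lemma SS_N: "1 \<le> SS N"
proof -
  have "SS 1 \<le> SS N" using N1 by (rule SS_mono)
  thus ?thesis by (simp add: SS_def PP_def)
qed

lemma phi_nonneg: "0 \<le> phi n"
  unfolding phi_def using SS_N SS_mono[of 0 "min n N"] by (simp add: SS_def)

lemma phi_N: "N \<le> n \<Longrightarrow> phi n = 1"
  unfolding phi_def using SS_N by simp

lemma phi_mono: "i \<le> j \<Longrightarrow> phi i \<le> phi j"
  unfolding phi_def using SS_N SS_mono[of "min i N" "min j N"] by (simp add: divide_right_mono)

lemma kernel_harm: "(\<integral>\<^sup>+y. ennreal (phi y) \<partial>measure_pmf (jump_kernel m d N n)) = ennreal (phi n)"
proof (cases "n = 0 \<or> N \<le> n")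
  case True thus ?thesis by (simp add: jump_kernel_def)
next
  case False
  hence n: "0 < n" "n < N" by auto
  define u where "u = rate_up m d N n"
  define w where "w = rate_down m d N n"
  have u: "0 < u" using up_pos[OF n] by (simp add: u_def)
  have w: "0 \<le> w" unfolding w_def rate_down_def by (simp add: bin_ge_nonneg)
  define p where "p = u / (u + w)"
  have p: "0 \<le> p" "p \<le> 1" using u w by (auto simp: p_def)
  have ker: "jump_kernel m d N n = map_pmf (\<lambda>b. if b then n + 1 else n - 1) (bernoulli_pmf p)"
    using False by (simp add: jump_kernel_def p_def u_def w_def)
  have P1: "PP n = PP (n-1) * (w / u)"
  proof -
    have "{1..n} = insert n {1..n-1}" using n by auto
    moreover have "n \<notin> {1..n-1}" by auto
    ultimately show ?thesis unfolding PP_def rr_def u_def w_def by (simp add: mult.commute)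
  qed
  have S1: "SS (n+1) = SS n + PP n" by (simp add: SS_def)
  have S2: "SS n = SS (n-1) + PP (n-1)" using n
    by (metis SS_def Suc_diff_1 lessThan_Suc sum.insert finite_lessThan lessThan_iff
          less_irrefl add.commute)
  have mins: "min (n+1) N = n+1" "min (n-1) N = n-1" "min n N = n" using n by auto
  have key: "phi (n+1) * p + phi (n-1) * (1-p) = phi n"
  proof -
    have uw: "u + w \<noteq> 0" using u w by simp
    have uw2: "u * u + u * w \<noteq> 0" using u w by (metis add_pos_nonneg less_numeral_extra(3) mult_nonneg_nonneg mult_pos_pos less_le)
    have q: "1 - p = w / (u+w)" unfolding p_def using uw by (simp add: field_simps)
    have pp: "p * PP n = (1-p) * PP (n-1)"
      unfolding P1 q unfolding p_def using u uw uw2 by (simp add: field_simps)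
    have "SS (n+1) * p + SS (n-1) * (1-p) = SS n + (p * PP n - (1-p) * PP (n-1))"
      unfolding S1 using S2 by (simp add: algebra_simps)
    hence "SS (n+1) * p + SS (n-1) * (1-p) = SS n" using pp by simp
    thus ?thesis unfolding phi_def mins using SS_N
      by (simp add: field_simps)
  qed
  have "(\<integral>\<^sup>+y. ennreal (phi y) \<partial>measure_pmf (jump_kernel m d N n))
      = ennreal (phi (n+1)) * ennreal p + ennreal (phi (n-1)) * ennreal (1-p)"
    unfolding ker using p by simp
  also have "\<dots> = ennreal (phi (n+1) * p + phi (n-1) * (1-p))"
    using p phi_nonneg by (simp add: ennreal_mult ennreal_plus)
  finally show ?thesis using key by simp
qed

lemma expect_phi: "(\<integral>\<^sup>+y. ennreal (phi y) \<partial>measure_pmf (jump_dist m d N i t)) = ennreal (phi i)"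
proof (induction t)
  case 0 thus ?case by (simp add: jump_dist_def phi_nonneg)
next
  case (Suc t)
  thus ?case by (simp add: jump_dist_Suc kernel_harm)
qed

lemma pmf_N_le: "pmf (jump_dist m d N i t) N \<le> phi i"
proof -
  have "ennreal (pmf (jump_dist m d N i t) N) = (\<integral>\<^sup>+y. indicator {N} y \<partial>measure_pmf (jump_dist m d N i t))"
    by (simp add: emeasure_pmf_single)
  also have "\<dots> \<le> (\<integral>\<^sup>+y. ennreal (phi y) \<partial>measure_pmf (jump_dist m d N i t))"
    by (intro nn_integral_mono) (auto simp: indicator_def phi_N phi_nonneg)
  finally show ?thesis by (simp add: expect_phi phi_nonneg)
qed

lemma pmf_N_incseq: "incseq (\<lambda>t. pmf (jump_dist m d N i t) N)"
proof (rule incseq_SucI)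
  fix t
  have "ennreal (pmf (jump_dist m d N i t) N)
     = ennreal (pmf (jump_kernel m d N N) N) * ennreal (pmf (jump_dist m d N i t) N)"
    by (simp add: jump_kernel_def)
  also have "\<dots> \<le> ennreal (pmf (jump_dist m d N i (Suc t)) N)"
    unfolding jump_dist_Suc ennreal_pmf_bind by (rule nn_integral_pmf_ge)
  finally show "pmf (jump_dist m d N i t) N \<le> pmf (jump_dist m d N i (Suc t)) N"
    by (simp add: ennreal_le_iff)
qed

lemma absorb_eq: "absorb_prob m d N i = (SUP t. pmf (jump_dist m d N i t) N)"
proof -
  have "bdd_above (range (\<lambda>t. pmf (jump_dist m d N i t) N))"
    using pmf_N_le by (auto intro!: bdd_aboveI)
  hence "(\<lambda>t. pmf (jump_dist m d N i t) N) \<longlonglongrightarrow> (SUP t. pmf (jump_dist m d N i t) N)"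
    using pmf_N_incseq by (rule LIMSEQ_incseq_SUP)
  thus ?thesis unfolding absorb_prob_def by (rule limI)
qed

lemma absorb_le: "absorb_prob m d N i \<le> phi i"
  unfolding absorb_eq by (rule cSUP_least) (auto simp: pmf_N_le)

lemma absorb_ge: "pmf (jump_dist m d N i t) N \<le> absorb_prob m d N i"
  unfolding absorb_eq using pmf_N_le by (intro cSUP_upper) (auto intro!: bdd_aboveI)

lemma kernel_up: assumes "0 < n" "n < N" shows "0 < pmf (jump_kernel m d N n) (n+1)"
proof -
  define u where "u = rate_up m d N n"
  define w where "w = rate_down m d N n"
  have u: "0 < u" using up_pos[OF assms] by (simp add: u_def)
  have w: "0 \<le> w" unfolding w_def rate_down_def by (simp add: bin_ge_nonneg)
  define p where "p = u / (u + w)"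
  have p: "0 < p" "p \<le> 1" using u w by (auto simp: p_def)
  have ker: "jump_kernel m d N n = map_pmf (\<lambda>b. if b then n + 1 else n - 1) (bernoulli_pmf p)"
    using assms by (simp add: jump_kernel_def p_def u_def w_def)
  have pre: "(\<lambda>b. if b then n + 1 else n - 1) -` {n+1} = {True}" using assms by (auto split: if_splits)
  show ?thesis unfolding ker pmf_map pre measure_pmf_single using p by simp
qed

lemma reach: assumes "1 \<le> i" "i + t \<le> N" shows "0 < pmf (jump_dist m d N i t) (i+t)"
  using assms(2)
proof (induction t)
  case 0 thus ?case by (simp add: jump_dist_def)
next
  case (Suc t)
  have a: "0 < pmf (jump_dist m d N i t) (i+t)" using Suc by simp
  have b: "0 < pmf (jump_kernel m d N (i+t)) (i+t+1)" using Suc assms by (intro kernel_up) auto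
  have "ennreal (pmf (jump_kernel m d N (i+t)) (i+t+1)) * ennreal (pmf (jump_dist m d N i t) (i+t))
     \<le> (\<integral>\<^sup>+x. ennreal (pmf (jump_kernel m d N x) (i+t+1)) \<partial>measure_pmf (jump_dist m d N i t))"
    by (rule nn_integral_pmf_ge)
  also have "\<dots> = ennreal (pmf (jump_dist m d N i (Suc t)) (i + Suc t))"
    unfolding jump_dist_Suc ennreal_pmf_bind by simp
  finally have le: "ennreal (pmf (jump_kernel m d N (i+t)) (i+t+1)) * ennreal (pmf (jump_dist m d N i t) (i+t))
     \<le> ennreal (pmf (jump_dist m d N i (Suc t)) (i + Suc t))" .
  have "0 < ennreal (pmf (jump_kernel m d N (i+t)) (i+t+1)) * ennreal (pmf (jump_dist m d N i t) (i+t))"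
    using a b by (simp add: ennreal_mult[symmetric])
  hence "0 < ennreal (pmf (jump_dist m d N i (Suc t)) (i + Suc t))" using le by (rule less_le_trans)
  thus ?case by simp
qed

lemma absorb_pos: assumes "1 \<le> i" "i \<le> N" shows "0 < absorb_prob m d N i"
proof -
  have "0 < pmf (jump_dist m d N i (N-i)) (i + (N-i))" using assms by (intro reach) auto
  also have "i + (N-i) = N" using assms by simp
  finally show ?thesis using absorb_ge[of i "N-i"] by simp
qed

end


definition "gr m d x = x * bin_le m x (m-d) / ((1-x) * bin_ge m x d)"

lemma bin_le_pos: assumes "0 \<le> x" "x < 1" shows "0 < bin_le m x k"
proof -
  have "0 < (\<Sum>j\<in>{..k}. bt m x j)"
    by (rule sum_pos2[of _ 0]) (use assms in \<open>auto simp: bt_def\<close>)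
  thus ?thesis using assms by (simp add: bin_le_sum)
qed

lemma gr_pos: assumes "0 < x" "x < 1" "d \<le> m" shows "0 < gr m d x"
  unfolding gr_def using assms bin_le_pos[of x m "m-d"] bin_ge_pos[of x d m]
  by (intro divide_pos_pos mult_pos_pos) auto

lemma g_real: assumes "0 < x" "x < 1" "d \<le> m" shows "real_of_ereal (g m d x) = gr m d x"
  unfolding g_def gr_def using assms bin_ge_pos[of x d m] by auto

lemma gr_gt1: assumes "0 < x" "x < 1/2" "2 \<le> m" "real m / 2 < real d" "d \<le> m" shows "1 < gr m d x"
proof -
  have "0 < (1-x) * bin_ge m x d" using assms bin_ge_pos[of x d m] by auto
  thus ?thesis unfolding gr_def using main_ineq[OF assms] by (simp add: less_divide_eq)
qed

lemma rr_gr: assumes "d \<le> m" "1 \<le> N" "0 < j" "j < N"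
  shows "rr m d N j = gr m d (real j / real N)"
proof -
  define x where "x = real j / real N"
  have x: "0 < x" "x < 1" using assms by (auto simp: x_def)
  have 1: "real (N - j) / real N = 1 - x" using assms by (simp add: x_def of_nat_diff field_simps)
  have 2: "real (N - j) = real N * (1 - x)" using assms by (simp add: x_def of_nat_diff field_simps)
  have 3: "real j = real N * x" using assms by (simp add: x_def)
  have G: "0 < bin_ge m x d" using bin_ge_pos[of x d m] x assms by auto
  have "rr m d N j = (real N * x) * bin_le m x (m-d) / ((real N * (1-x)) * bin_ge m x d)"
    unfolding rr_def[OF assms(1,2)] rate_down_def rate_up_def 1 2 3
    using bin_ge_flip[of x d m] x assms by (simp add: x_def)
  also have "\<dots> = gr m d x" unfolding gr_def using assms by simp
  finally show ?thesis by (simp add: x_def)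
qed

lemma PP_split: assumes "d \<le> m" "1 \<le> N" "k \<le> b"
  shows "PP m d N b = PP m d N k * (\<Prod>j\<in>{k+1..b}. rr m d N j)"
proof -
  have "{1..b} = {1..k} \<union> {k+1..b}" using assms by auto
  thus ?thesis unfolding PP_def[OF assms(1,2)]
    by (simp add: prod.union_disjoint[symmetric] ivl_disj_int)
qed



lemma h_bound:
  assumes m: "2 \<le> m" "real m / 2 < real d" "d \<le> m" and N1: "1 \<le> N"
    and a: "0 < \<alpha>" "\<alpha> < 1/2"
  shows "0 < h m d N \<alpha>"
    and "ln (h m d N \<alpha>) \<le> ln (real N) - (\<Sum>j\<in>{nat \<lceil>real N * \<alpha>\<rceil>..N div 2}. ln (gr m d (real j / real N)))"
proof -
  note dm = m(3)
  define x where "x = real N * \<alpha>"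
  define c where "c = nat \<lceil>x\<rceil>"
  define f where "f = nat \<lfloor>x\<rfloor>"
  define K where "K = N div 2"
  have x0: "0 < x" using a N1 by (simp add: x_def)
  have xN: "x < real N / 2" using a N1 by (simp add: x_def)
  have cc: "of_int \<lceil>x\<rceil> - 1 < x" "x \<le> of_int \<lceil>x\<rceil>" using ceiling_correct[of x] by auto
  have c1: "1 \<le> c" using x0 cc unfolding c_def by linarith
  have cx: "real c < x + 1" using cc x0 unfolding c_def by linarith
  have cN: "c \<le> N" using cx xN N1 by linarith
  have cK: "c - 1 \<le> K"
  proof -
    have "real (c-1) < real N / 2" using cx xN c1 by (simp add: of_nat_diff)
    hence "2 * (c-1) < N" by linarith
    thus ?thesis unfolding K_def by linarith
  qed
  have KN: "K < N" using N1 unfolding K_def by simp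
  have fc: "f \<le> c" unfolding f_def c_def using cc
    by (metis ceiling_mono floor_le_ceiling nat_mono)
  have rr_ge1: "1 \<le> rr m d N j" if "1 \<le> j" "j \<le> c - 1" for j
  proof -
    have jN: "j < N" using that cK KN by linarith
    have "real j < x" using that cx c1 by (simp add: of_nat_diff)
    hence "real j / real N < 1/2" using xN N1 by (simp add: divide_less_eq)
    hence "1 < gr m d (real j / real N)" using that N1 m by (intro gr_gt1) auto
    thus ?thesis using rr_gr[OF dm N1, of j] that jN by simp
  qed
  have rr_pos: "0 < rr m d N j" if "1 \<le> j" "j \<le> K" for j
  proof -
    have jN: "j < N" using that KN by linarith
    thus ?thesis using rr_gr[OF dm N1, of j] gr_pos[of "real j / real N" d m] that dm by auto
  qed
  have PPc: "1 \<le> PP m d N (c-1)"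
  proof -
    have "1 \<le> (\<Prod>j\<in>{1..c-1}. rr m d N j)" using rr_ge1 by (intro prod_ge_1) auto
    thus ?thesis by (simp add: PP_def[OF dm N1])
  qed
  have PPk: "PP m d N k \<le> PP m d N (c-1)" if "k \<le> c-1" for k
  proof -
    have "1 \<le> (\<Prod>j\<in>{k+1..c-1}. rr m d N j)" using rr_ge1 by (intro prod_ge_1) auto
    hence "PP m d N k * 1 \<le> PP m d N k * (\<Prod>j\<in>{k+1..c-1}. rr m d N j)"
      using PP_nonneg[OF dm N1] by (intro mult_left_mono) auto
    thus ?thesis using PP_split[OF dm N1 that] by simp
  qed
  define Q where "Q = (\<Prod>j\<in>{c..K}. rr m d N j)"
  have Pipos: "0 < Q" unfolding Q_def using rr_pos c1 by (intro prod_pos) auto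
  have PPK: "PP m d N K = PP m d N (c-1) * Q"
    using PP_split[OF dm N1 cK] c1 by (simp add: Q_def)
  have SSc: "SS m d N c \<le> real c * PP m d N (c-1)"
  proof -
    have "SS m d N c \<le> real (card {..<c}) * PP m d N (c-1)"
      unfolding SS_def[OF dm N1] by (rule sum_bounded_above) (use PPk in auto)
    thus ?thesis by simp
  qed
  have SSN: "PP m d N K \<le> SS m d N N"
    unfolding SS_def[OF dm N1] using KN PP_nonneg[OF dm N1] by (intro member_le_sum) auto
  have phic: "phi m d N c \<le> real c / Q"
  proof -
    have "phi m d N c = SS m d N c / SS m d N N" using cN by (simp add: phi_def[OF dm N1])
    also have "\<dots> \<le> (real c * PP m d N (c-1)) / (PP m d N (c-1) * Q)"
      using SSc SSN PPK PPc Pipos SS_N[OF dm N1]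
      by (intro frac_le) (auto intro!: mult_nonneg_nonneg)
    also have "\<dots> = real c / Q" using PPc by simp
    finally show ?thesis .
  qed
  have Apos: "0 < absorb_prob m d N c" using c1 cN by (intro absorb_pos[OF dm N1])
  have Anonneg: "0 \<le> absorb_prob m d N i" for i
    using absorb_ge[OF dm N1, of i 0] pmf_nonneg by (metis order_trans)
  have Ac: "absorb_prob m d N c \<le> phi m d N c" by (rule absorb_le[OF dm N1])
  have Af: "absorb_prob m d N f \<le> phi m d N c"
    using absorb_le[OF dm N1, of f] phi_mono[OF dm N1 fc] by simp
  have hb: "0 < h m d N \<alpha> \<and> h m d N \<alpha> \<le> phi m d N c"
  proof (cases "x \<in> \<int>")
    case True
    then obtain z where z: "x = of_int z" by (auto elim: Ints_cases)
    hence "f = c" unfolding f_def c_def by simp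
    thus ?thesis unfolding h_def using True Apos Ac by (simp add: x_def[symmetric] f_def c_def)
  next
    case False
    have ce: "\<lceil>x\<rceil> = \<lfloor>x\<rfloor> + 1" using False unfolding ceiling_altdef by (metis Ints_of_int)
    define \<theta> where "\<theta> = x - of_int \<lfloor>x\<rfloor>"
    have th: "0 < \<theta>" "\<theta> < 1" using False unfolding \<theta>_def
      by (metis Ints_of_int diff_gt_0_iff_gt floor_correct order_le_less)
         (use floor_correct[of x] in linarith)
    have hh: "h m d N \<alpha> = \<theta> * absorb_prob m d N c + (1 - \<theta>) * absorb_prob m d N f"
      unfolding h_def using False by (simp add: x_def[symmetric] f_def c_def \<theta>_def ce)
    have "0 < \<theta> * absorb_prob m d N c + (1 - \<theta>) * absorb_prob m d N f"
      using th Apos Anonneg[of f] by (intro add_pos_nonneg) auto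
    moreover have "\<theta> * absorb_prob m d N c + (1 - \<theta>) * absorb_prob m d N f \<le> \<theta> * phi m d N c + (1 - \<theta>) * phi m d N c"
      using th Ac Af by (intro add_mono mult_left_mono) auto
    ultimately show ?thesis unfolding hh by (simp add: algebra_simps)
  qed
  thus "0 < h m d N \<alpha>" by simp
  have "ln (h m d N \<alpha>) \<le> ln (real c / Q)"
    using hb phic by (intro ln_mono) (auto intro: order_trans)
  also have "\<dots> = ln (real c) - (\<Sum>j\<in>{c..K}. ln (rr m d N j))"
  proof -
    have "ln Q = (\<Sum>j\<in>{c..K}. ln (rr m d N j))" unfolding Q_def
    proof (rule ln_prod)
      fix i assume "i \<in> {c..K}"
      hence "0 < rr m d N i" using c1 by (intro rr_pos) auto
      thus "rr m d N i \<noteq> 0" by simp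
    qed simp
    thus ?thesis using Pipos c1 by (simp add: ln_div)
  qed
  also have "(\<Sum>j\<in>{c..K}. ln (rr m d N j)) = (\<Sum>j\<in>{c..K}. ln (gr m d (real j / real N)))"
    using rr_gr[OF dm N1] c1 KN by (intro sum.cong) auto
  also have "ln (real c) \<le> ln (real N)" using c1 cN by simp
  finally show "ln (h m d N \<alpha>) \<le> ln (real N) - (\<Sum>j\<in>{nat \<lceil>real N * \<alpha>\<rceil>..N div 2}. ln (gr m d (real j / real N)))"
    by (simp add: c_def x_def K_def)
qed



lemma int_lower:
  fixes F :: "real \<Rightarrow> real"
  assumes "continuous_on {A..B} F" "A \<le> u" "u \<le> v" "v \<le> B" "\<And>x. x \<in> {u..v} \<Longrightarrow> L \<le> F x"
  shows "L * (v - u) \<le> integral {u..v} F"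
proof -
  have "F integrable_on {u..v}"
    using assms by (intro integrable_continuous_interval continuous_on_subset[OF assms(1)]) auto
  hence "integral {u..v} (\<lambda>x. L) \<le> integral {u..v} F"
    using assms by (intro integral_le) auto
  thus ?thesis using assms by (simp add: mult.commute)
qed

lemma int_upper:
  fixes F :: "real \<Rightarrow> real"
  assumes "continuous_on {A..B} F" "A \<le> u" "u \<le> v" "v \<le> B" "\<And>x. x \<in> {u..v} \<Longrightarrow> F x \<le> L"
  shows "integral {u..v} F \<le> L * (v - u)"
proof -
  have "F integrable_on {u..v}"
    using assms by (intro integrable_continuous_interval continuous_on_subset[OF assms(1)]) auto
  hence "integral {u..v} F \<le> integral {u..v} (\<lambda>x. L)"
    using assms by (intro integral_le) auto
  thus ?thesis using assms by (simp add: mult.commute)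
qed

lemma int_comb:
  fixes F :: "real \<Rightarrow> real"
  assumes "continuous_on {A..B} F" "A \<le> u" "u \<le> v" "v \<le> w" "w \<le> B"
  shows "integral {u..v} F + integral {v..w} F = integral {u..w} F"
proof -
  have "F integrable_on {u..w}"
    using assms by (intro integrable_continuous_interval continuous_on_subset[OF assms(1)]) auto
  thus ?thesis using assms Henstock_Kurzweil_Integration.integral_combine[where a=u and c=v and b=w and f=F] by auto
qed

lemma riemann_pieces:
  fixes F :: "real \<Rightarrow> real"
  assumes cont: "continuous_on {A..B} F" and N: "0 < N" and e: "0 \<le> e"
    and close: "\<And>x j. A \<le> x \<Longrightarrow> x \<le> real j / real N \<Longrightarrow> real j / real N \<le> B
               \<Longrightarrow> real j / real N - x \<le> 1 / real N \<Longrightarrow> F x \<le> F (real j / real N) + e"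
    and sA: "A \<le> real s / real N" and sB: "real (s + n) / real N \<le> B"
  shows "integral {real s / real N .. real (s+n) / real N} F
         \<le> (\<Sum>j\<in>{s+1..s+n}. F (real j / real N)) / real N + real n * e / real N"
  using sB
proof (induction n)
  case 0 thus ?case by simp
next
  case (Suc n)
  have Nr: "0 < real N" using N by simp
  have le1: "real s / real N \<le> real (s+n) / real N" using Nr by (simp add: divide_right_mono)
  have le2: "real (s+n) / real N \<le> real (s + Suc n) / real N" using Nr by (simp add: divide_right_mono)
  have IH: "integral {real s / real N .. real (s+n) / real N} F
         \<le> (\<Sum>j\<in>{s+1..s+n}. F (real j / real N)) / real N + real n * e / real N"
    using Suc le2 by auto
  have piece: "integral {real (s+n) / real N .. real (s + Suc n) / real N} F
     \<le> (F (real (s + Suc n) / real N) + e) * (real (s + Suc n) / real N - real (s+n) / real N)"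
  proof (rule int_upper[OF cont])
    show "A \<le> real (s + n) / real N" using sA le1 by linarith
    fix x assume x: "x \<in> {real (s + n) / real N..real (s + Suc n) / real N}"
    have d1: "real (s + Suc n) / real N - real (s+n) / real N = 1 / real N"
      using Nr by (simp add: diff_divide_distrib[symmetric])
    show "F x \<le> F (real (s + Suc n) / real N) + e"
      by (rule close) (use x sA le1 Suc.prems d1 in auto)
  qed (use le2 Suc.prems in auto)
  have diff: "real (s + Suc n) / real N - real (s+n) / real N = 1 / real N"
    using Nr by (simp add: diff_divide_distrib[symmetric])
  have "integral {real s / real N .. real (s + Suc n) / real N} F
     = integral {real s / real N .. real (s+n) / real N} F + integral {real (s+n) / real N .. real (s + Suc n) / real N} F"
    using int_comb[OF cont sA le1 le2 Suc.prems] by simp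
  also have "\<dots> \<le> ((\<Sum>j\<in>{s+1..s+n}. F (real j / real N)) / real N + real n * e / real N)
      + (F (real (s + Suc n) / real N) + e) * (1 / real N)"
    using IH piece diff by simp
  also have "\<dots> = (\<Sum>j\<in>{s+1..s + Suc n}. F (real j / real N)) / real N + real (Suc n) * e / real N"
    by (simp add: add_divide_distrib algebra_simps)
  finally show ?case .
qed



lemma riemann:
  fixes F :: "real \<Rightarrow> real"
  assumes cont: "continuous_on {\<alpha>/2..1/2} F" and a: "0 < \<alpha>" "\<alpha> < 1/2" and eps: "0 < \<epsilon>"
  shows "\<exists>N0. \<forall>N\<ge>N0. integral {\<alpha>..1/2} F - \<epsilon>
            \<le> (\<Sum>j\<in>{nat \<lceil>real N * \<alpha>\<rceil>..N div 2}. F (real j / real N)) / real N"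
proof -
  define A where "A = \<alpha>/2"
  define B :: real where "B = 1/2"
  have cont': "continuous_on {A..B} F" using cont by (simp add: A_def B_def)
  have "uniformly_continuous_on {A..B} F"
    using cont' by (intro compact_uniformly_continuous) auto
  then obtain \<eta> where eta: "0 < \<eta>"
    and uc: "\<And>x x'. x \<in> {A..B} \<Longrightarrow> x' \<in> {A..B} \<Longrightarrow> dist x' x < \<eta> \<Longrightarrow> dist (F x') (F x) < \<epsilon>/2"
    unfolding uniformly_continuous_on_def using eps by (metis half_gt_zero)
  have "bounded (F ` {A..B})"
    using cont' by (intro compact_imp_bounded compact_continuous_image) auto
  then obtain M where M: "0 < M" "\<And>x. x \<in> {A..B} \<Longrightarrow> \<bar>F x\<bar> \<le> M"
    unfolding bounded_pos by auto
  define T where "T = 1 + 2/\<eta> + 2/\<alpha> + 1/(1 - 2*\<alpha>) + 4*M/\<epsilon>"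
  obtain N0 :: nat where N0: "T \<le> real N0" using real_arch_simple by blast
  show ?thesis
  proof (intro exI[of _ N0] allI impI)
    fix N assume NN0: "N0 \<le> N"
    have TN: "T \<le> real N" using N0 NN0 by linarith
    have p1: "0 < 2/\<eta>" "0 < 2/\<alpha>" "0 < 1/(1-2*\<alpha>)" "0 < 4*M/\<epsilon>" using eta a M eps by auto
    have Npos: "1 \<le> real N" using TN p1 unfolding T_def by linarith
    hence N0': "0 < N" by simp
    have Nr: "0 < real N" using Npos by simp
    have f1: "2/\<eta> \<le> real N" "2/\<alpha> \<le> real N" "1/(1-2*\<alpha>) \<le> real N" "4*M/\<epsilon> \<le> real N"
      using TN p1 unfolding T_def by linarith+
    have g1: "1 / real N < \<eta>"
    proof -
      have "2 \<le> real N * \<eta>" using f1(1) eta by (simp add: divide_le_eq mult.commute)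
      thus ?thesis using Nr eta by (simp add: divide_less_eq mult.commute)
    qed
    have g2: "1 / real N \<le> \<alpha>/2"
    proof -
      have "2 \<le> real N * \<alpha>" using f1(2) a by (simp add: divide_le_eq mult.commute)
      thus ?thesis using Nr a by (simp add: divide_le_eq mult.commute)
    qed
    have g3: "1 / real N \<le> 1 - 2*\<alpha>"
    proof -
      have "1 \<le> real N * (1 - 2*\<alpha>)" using f1(3) a by (simp add: divide_le_eq mult.commute)
      thus ?thesis using Nr a by (simp add: divide_le_eq mult.commute)
    qed
    have g4: "2 * M / real N \<le> \<epsilon>/2"
    proof -
      have "4*M \<le> real N * \<epsilon>" using f1(4) eps by (simp add: divide_le_eq mult.commute)
      thus ?thesis using Nr eps by (simp add: divide_le_eq mult.commute)
    qed
    define x where "x = real N * \<alpha>"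
    define c where "c = nat \<lceil>x\<rceil>"
    define s where "s = c - 1"
    define K where "K = N div 2"
    have x0: "0 < x" using a Nr by (simp add: x_def)
    have cc: "of_int \<lceil>x\<rceil> - 1 < x" "x \<le> of_int \<lceil>x\<rceil>" using ceiling_correct[of x] by auto
    have c1: "1 \<le> c" using x0 cc unfolding c_def by linarith
    have cx: "real c < x + 1" "x \<le> real c" using cc x0 unfolding c_def by linarith+
    have sc: "real s = real c - 1" "s + 1 = c" using c1 by (auto simp: s_def of_nat_diff)
    have sN1: "real s / real N \<le> \<alpha>"
      using cx sc Nr by (simp add: divide_le_eq x_def mult.commute)
    have sN2: "\<alpha> - 1 / real N \<le> real s / real N"
    proof -
      have "real N * \<alpha> - 1 \<le> real s" using cx sc by (simp add: x_def)
      hence "(real N * \<alpha> - 1) / real N \<le> real s / real N" using Nr by (simp add: divide_right_mono)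
      thus ?thesis using Nr by (simp add: diff_divide_distrib)
    qed
    have sA: "A \<le> real s / real N" using sN2 g2 unfolding A_def by linarith
    have K2: "real N - 1 \<le> 2 * real K" "2 * real K \<le> real N" unfolding K_def by linarith+
    have KB: "real K / real N \<le> B" using K2 Nr by (simp add: B_def divide_le_eq)
    have KB2: "B - real K / real N \<le> 1 / real N"
    proof -
      have "B - real K / real N = (real N - 2 * real K) / (2 * real N)" using Nr by (simp add: B_def field_simps)
      also have "\<dots> \<le> 1 / (2 * real N)" using K2 Nr by (intro divide_right_mono) auto
      finally have "B - real K / real N \<le> 1 / (2 * real N)" .
      also have "\<dots> \<le> 1 / real N" using Nr by (simp add: frac_le)
      finally show ?thesis .
    qed
    have KB3: "B - real K / real N \<le> 1 / (2 * real N)"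
    proof -
      have "B - real K / real N = (real N - 2 * real K) / (2 * real N)" using Nr by (simp add: B_def field_simps)
      also have "\<dots> \<le> 1 / (2 * real N)" using K2 Nr by (intro divide_right_mono) auto
      finally show ?thesis .
    qed
    have Ka: "\<alpha> \<le> real K / real N" using KB3 g3 unfolding B_def by simp
    have sK: "s \<le> K"
    proof -
      have "real s / real N \<le> real K / real N" using sN1 Ka by linarith
      hence "real s \<le> real K" using Nr by (simp add: divide_le_cancel)
      thus ?thesis by simp
    qed
    define n where "n = K - s"
    have sn: "s + n = K" using sK by (simp add: n_def)
    have nN: "real n \<le> real N" using sK K2 by (simp add: n_def of_nat_diff)
    have RP: "integral {real s / real N .. real (s+n) / real N} F
         \<le> (\<Sum>j\<in>{s+1..s+n}. F (real j / real N)) / real N + real n * (\<epsilon>/2) / real N"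
    proof (rule riemann_pieces[OF cont' N0'])
      show "0 \<le> \<epsilon>/2" using eps by simp
      show "A \<le> real s / real N" by (rule sA)
      show "real (s + n) / real N \<le> B" using sn KB by simp
      fix y j assume y: "A \<le> y" "y \<le> real j / real N" "real j / real N \<le> B" "real j / real N - y \<le> 1 / real N"
      have "dist (F y) (F (real j / real N)) < \<epsilon>/2"
        using y g1 by (intro uc) (auto simp: dist_real_def)
      thus "F y \<le> F (real j / real N) + \<epsilon>/2" unfolding dist_real_def by linarith
    qed
    have ne: "real n * (\<epsilon>/2) / real N \<le> \<epsilon>/2"
      using nN Nr eps by (simp add: divide_le_eq mult.commute mult_left_mono)
    define S where "S = (\<Sum>j\<in>{c..K}. F (real j / real N)) / real N"
    have RP': "integral {real s / real N .. real K / real N} F \<le> S + \<epsilon>/2"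
      using RP[unfolded sn sc(2)] ne unfolding S_def by linarith
    have lo: "- M * (\<alpha> - real s / real N) \<le> integral {real s / real N .. \<alpha>} F"
    proof (rule int_lower[OF cont' sA sN1])
      show "\<alpha> \<le> B" using Ka KB by linarith
      fix y assume "y \<in> {real s / real N..\<alpha>}"
      hence "y \<in> {A..B}" using sA Ka KB by auto
      thus "- M \<le> F y" using M(2)[of y] by (simp add: abs_le_iff)
    qed
    have lo2: "- M * (1 / real N) \<le> - M * (\<alpha> - real s / real N)"
    proof -
      have "M * (\<alpha> - real s / real N) \<le> M * (1 / real N)" using M sN2 by (intro mult_left_mono) auto
      thus ?thesis by simp
    qed
    have up: "integral {real K / real N .. B} F \<le> M * (B - real K / real N)"
    proof (rule int_upper[OF cont'])
      show "A \<le> real K / real N" using Ka sA sN1 by linarith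
      fix y assume "y \<in> {real K / real N..B}"
      hence "y \<in> {A..B}" using sA Ka sN1 by auto
      thus "F y \<le> M" using M(2)[of y] by (simp add: abs_le_iff)
    qed (use KB in auto)
    have up2: "M * (B - real K / real N) \<le> M * (1 / real N)" using M KB2 by (intro mult_left_mono) auto
    have c1': "integral {real s / real N .. \<alpha>} F + integral {\<alpha> .. real K / real N} F
        = integral {real s / real N .. real K / real N} F"
      by (rule int_comb[OF cont' sA sN1 Ka KB])
    have c2: "integral {\<alpha> .. real K / real N} F + integral {real K / real N .. B} F = integral {\<alpha>..B} F"
      using sA sN1 by (intro int_comb[OF cont' _ Ka KB]) auto
    have "integral {\<alpha>..B} F \<le> S + \<epsilon>/2 + 2 * M / real N"
      using RP' lo lo2 up up2 c1' c2 by simp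
    thus "integral {\<alpha>..1/2} F - \<epsilon> \<le> (\<Sum>j\<in>{nat \<lceil>real N * \<alpha>\<rceil>..N div 2}. F (real j / real N)) / real N"
      using g4 unfolding S_def c_def x_def K_def B_def by simp
  qed
qed



lemma F_cont:
  assumes "0 < a" "b < 1" "d \<le> m"
  shows "continuous_on {a..b} (\<lambda>x. ln (gr m d x))"
proof -
  have eq: "gr m d x = x * (\<Sum>j\<in>{..m-d}. real (m choose j) * x^j * (1-x)^(m-j))
        / ((1-x) * (\<Sum>k\<in>{d..m}. real (m choose k) * x^k * (1-x)^(m-k)))" if "x \<in> {a..b}" for x
    using that assms by (simp add: gr_def bin_le_sum bin_ge_sum bt_def)
  have pos: "0 < gr m d x" if "x \<in> {a..b}" for x using that assms by (intro gr_pos) auto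
  have den: "(1-x) * (\<Sum>k\<in>{d..m}. real (m choose k) * x^k * (1-x)^(m-k)) \<noteq> 0" if "x \<in> {a..b}" for x
    using that assms bin_ge_pos[of x d m] by (simp add: bin_ge_sum bt_def)
  have num: "(\<Sum>j\<in>{..m-d}. real (m choose j) * x^j * (1-x)^(m-j)) \<noteq> 0" if "x \<in> {a..b}" for x
    using that assms bin_le_pos[of x m "m-d"] by (simp add: bin_le_sum bt_def)
  have "continuous_on {a..b} (\<lambda>x. ln (x * (\<Sum>j\<in>{..m-d}. real (m choose j) * x^j * (1-x)^(m-j))
        / ((1-x) * (\<Sum>k\<in>{d..m}. real (m choose k) * x^k * (1-x)^(m-k)))))"
    apply (intro continuous_intros)
    using den pos eq assms num apply auto
    done
  thus ?thesis
  proof (rule continuous_on_eq)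
    fix x assume "x \<in> {a..b}"
    thus "ln (x * (\<Sum>j\<in>{..m-d}. real (m choose j) * x^j * (1-x)^(m-j))
        / ((1-x) * (\<Sum>k\<in>{d..m}. real (m choose k) * x^k * (1-x)^(m-k)))) = ln (gr m d x)"
      by (simp only: eq)
  qed
qed

theorem theorem2:
  fixes m d :: nat
  assumes "m \<ge> 2" and "real m / 2 < real d" and "d \<le> m"
  shows "(\<forall>x\<in>{0..<1/2}. g m d x > 1) \<and>
         (\<forall>\<alpha>\<in>{0<..<1/2}.
            limsup (\<lambda>N. ereal (ln (h m d N \<alpha>) / real N))
              \<le> ereal (- integral {\<alpha>..1/2} (\<lambda>x. ln (real_of_ereal (g m d x)))))"
proof (intro conjI ballI)
  fix x :: real assume "x \<in> {0..<1/2}"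
  thus "g m d x > 1" using g_gt1[OF assms] by auto
next
  fix \<alpha> :: real assume "\<alpha> \<in> {0<..<1/2}"
  hence a: "0 < \<alpha>" "\<alpha> < 1/2" by auto
  define F where "F = (\<lambda>x. ln (gr m d x))"
  define I where "I = integral {\<alpha>..1/2} F"
  have cont: "continuous_on {\<alpha>/2..1/2} F" unfolding F_def using a assms by (intro F_cont) auto
  have II: "integral {\<alpha>..1/2} (\<lambda>x. ln (real_of_ereal (g m d x))) = I"
    unfolding I_def F_def using a assms by (intro integral_cong) (auto simp: g_real)
  have lnN: "((\<lambda>n. ln (real n) / real n) \<longlongrightarrow> 0) sequentially"
    by (rule filterlim_compose[OF ln_x_over_x_tendsto_0 filterlim_real_sequentially])
  show "limsup (\<lambda>N. ereal (ln (h m d N \<alpha>) / real N))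
              \<le> ereal (- integral {\<alpha>..1/2} (\<lambda>x. ln (real_of_ereal (g m d x))))"
    unfolding II
  proof (rule ereal_le_epsilon2)
    fix e :: real assume e: "0 < e"
    obtain N0 where N0: "\<And>N. N \<ge> N0 \<Longrightarrow> I - e/2
            \<le> (\<Sum>j\<in>{nat \<lceil>real N * \<alpha>\<rceil>..N div 2}. F (real j / real N)) / real N"
      using riemann[OF cont a, of "e/2"] e unfolding I_def by auto
    have ev1: "eventually (\<lambda>N. ln (real N) / real N < e/2) sequentially"
      using lnN e by (intro order_tendstoD(2)) auto
    have ev2: "eventually (\<lambda>N. N \<ge> max 1 N0) sequentially" by (rule eventually_ge_at_top)
    have "eventually (\<lambda>N. ereal (ln (h m d N \<alpha>) / real N) \<le> ereal (- I) + ereal e) sequentially"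
      using ev1 ev2
    proof eventually_elim
      case (elim N)
      hence N1: "1 \<le> N" and NN0: "N0 \<le> N" by auto
      have Nr: "0 < real N" using N1 by simp
      define S where "S = (\<Sum>j\<in>{nat \<lceil>real N * \<alpha>\<rceil>..N div 2}. F (real j / real N))"
      have hb: "ln (h m d N \<alpha>) \<le> ln (real N) - S"
        using h_bound(2)[OF assms N1 a] unfolding S_def F_def .
      have "ln (h m d N \<alpha>) / real N \<le> (ln (real N) - S) / real N"
        using hb Nr by (intro divide_right_mono) auto
      also have "\<dots> = ln (real N) / real N - S / real N" by (simp add: diff_divide_distrib)
      also have "\<dots> \<le> - I + e" using elim(1) N0[OF NN0] unfolding S_def by linarith
      finally show ?case by simp
    qed
    hence "limsup (\<lambda>N. ereal (ln (h m d N \<alpha>) / real N)) \<le> ereal (- I) + ereal e"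
      by (rule Limsup_bounded)
    thus "limsup (\<lambda>N. ereal (ln (h m d N \<alpha>) / real N)) \<le> ereal (- I) + ereal e" .
  qed
qed


end
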